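(* Let $G$ be a finite group, let $\Pi$ be the set of prime divisors of $|G|$, and let $\mathrm{GKC}(G)$ be the Gruenberg--Kegel complex of $G$. Then: (i) the $1$-skeleton of $\mathrm{GKC}(G)$ is the Gruenberg--Kegel graph of $G$; (ii) if $G$ is nilpotent, then $\mathrm{GKC}(G)$ is a simplex, i.e. $\Pi$ itself is a simplex of $\mathrm{GKC}(G)$; (iii) there is a positive integer $d(G)$ such that, for positive integers $n$, $\mathrm{GKC}(G^n)$ is a simplex if and only if $n\ge d(G)$, where $G^n$ is the direct product of $n$ copies of $G$.
   Context: The Gruenberg--Kegel complex $\mathrm{GKC}(G)$ of a finite group $G$ has vertex set $\Pi$, the set of prime divisors of $|G|$, and a subset $\Gamma\subseteq\Pi$ is a simplex if and only if $G$ contains an element whose order is the product of the primes in $\Gamma$. The Gruenberg--Kegel graph of $G$ has vertex set $\Pi$, with distinct primes $p,q$ adjacent if $G$ contains an element of order $pq$. The $1$-skeleton of a simplicial complex is the graph formed by its simplices of cardinality at most $2$. A complex is called a simplex if its whole vertex set is one of its simplices. *)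

theory Defs
  imports "HOL-Algebra.Algebra" "HOL-Computational_Algebra.Primes"
begin

definition prime_divs :: "('a, 'b) monoid_scheme \<Rightarrow> nat set" where
  "prime_divs G = {p. Factorial_Ring.prime p \<and> p dvd order G}"

definition GKC :: "('a, 'b) monoid_scheme \<Rightarrow> nat set set" where
  "GKC G = {S. S \<subseteq> prime_divs G \<and> (\<exists>x\<in>carrier G. group.ord G x = \<Prod>S)}"

definition GK_adj :: "('a, 'b) monoid_scheme \<Rightarrow> nat \<Rightarrow> nat \<Rightarrow> bool" where
  "GK_adj G p q \<longleftrightarrow> p \<in> prime_divs G \<and> q \<in> prime_divs G \<and> p \<noteq> q \<and>
     (\<exists>x\<in>carrier G. group.ord G x = p * q)"

definition skeleton1_vertices :: "'v set set \<Rightarrow> 'v set" where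
  "skeleton1_vertices K = {v. {v} \<in> K}"

definition skeleton1_edges :: "'v set set \<Rightarrow> 'v set set" where
  "skeleton1_edges K = {e. e \<in> K \<and> card e = 2}"

definition is_simplex_complex :: "'v set \<Rightarrow> 'v set set \<Rightarrow> bool" where
  "is_simplex_complex V K \<longleftrightarrow> V \<in> K"

fun lower_central :: "('a, 'b) monoid_scheme \<Rightarrow> nat \<Rightarrow> 'a set" where
  "lower_central G 0 = carrier G"
| "lower_central G (Suc i) =
     generate G {h \<otimes>\<^bsub>G\<^esub> k \<otimes>\<^bsub>G\<^esub> inv\<^bsub>G\<^esub> h \<otimes>\<^bsub>G\<^esub> inv\<^bsub>G\<^esub> k | h k.
                  h \<in> lower_central G i \<and> k \<in> carrier G}"

definition nilpotent_group :: "('a, 'b) monoid_scheme \<Rightarrow> bool" where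
  "nilpotent_group G \<longleftrightarrow> group G \<and> (\<exists>c. lower_central G c = {\<one>\<^bsub>G\<^esub>})"

definition dir_power :: "('a, 'b) monoid_scheme \<Rightarrow> nat \<Rightarrow> (nat \<Rightarrow> 'a) monoid" where
  "dir_power G n = product_group {..<n} (\<lambda>_. G)"

end

theory Submission
  imports Defs
begin
context group begin
lemma cauchy_ex:
  assumes fin: "finite (carrier G)" and p: "Factorial_Ring.prime p" and dv: "p dvd order G"
  shows "\<exists>x\<in>carrier G. ord x = p"
proof -
  obtain m where m: "order G = p ^ 1 * m" using dv by auto
  obtain H where H: "subgroup H G" "card H = p"
    using sylow_thm[OF p is_group m fin] by auto
  have "card H \<ge> 2" unfolding H(2) using prime_ge_2_nat[OF p] .
  have "\<exists>x\<in>H. x \<noteq> \<one>"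
  proof (rule ccontr)
    assume "\<not> (\<exists>x\<in>H. x \<noteq> \<one>)"
    then have "H \<subseteq> {\<one>}" by blast
    then have "H = {} \<or> H = {\<one>}" by (rule subset_singletonD)
    then show False using \<open>card H \<ge> 2\<close> by auto
  qed
  then obtain x where x: "x \<in> H" "x \<noteq> \<one>" by blast
  have xc: "x \<in> carrier G" by (rule subgroup.mem_carrier[OF H(1) x(1)])
  have "x [^]\<^bsub>G\<lparr>carrier := H\<rparr>\<^esub> order (G\<lparr>carrier := H\<rparr>) = \<one>\<^bsub>G\<lparr>carrier := H\<rparr>\<^esub>"
    using group.pow_order_eq_1[OF subgroup_imp_group[OF H(1)]] x(1) by simp
  then have "x [^] order (G\<lparr>carrier := H\<rparr>) = \<one>" by (simp flip: nat_pow_consistent)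
  then have "x [^] p = \<one>" using H(2) by (simp add: order_def)
  then have "ord x dvd p" using pow_eq_id[OF xc] by simp
  moreover have "ord x \<noteq> 1" using ord_eq_1[OF xc] x(2) by simp
  ultimately show ?thesis using p xc prime_nat_iff by metis
qed
lemma ord_mult_coprime:
  assumes x: "x \<in> carrier G" and y: "y \<in> carrier G" and c: "x \<otimes> y = y \<otimes> x"
    and cop: "coprime (ord x) (ord y)"
  shows "ord (x \<otimes> y) = ord x * ord y"
proof -
  let ?k = "ord (x \<otimes> y)"
  have d1: "?k dvd ord x * ord y" using ord_mul_divides[OF c x y] .
  have "(x \<otimes> y) [^] ?k = \<one>" using x y by simp
  then have e: "x [^] ?k \<otimes> y [^] ?k = \<one>" using pow_mult_distrib[OF c x y] by simp
  then have ex: "x [^] ?k = inv (y [^] ?k)" using inv_equality[OF e] x y by simp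
  have "x [^] (?k * ord y) = \<one>"
  proof -
    have "x [^] (?k * ord y) = (x [^] ?k) [^] ord y" using x by (simp add: nat_pow_pow)
    also have "\<dots> = inv ((y [^] ?k) [^] ord y)" using ex y by (simp add: nat_pow_inv)
    also have "\<dots> = inv ((y [^] ord y) [^] ?k)" using nat_pow_pow[OF y, of ?k "ord y"] nat_pow_pow[OF y, of "ord y" ?k] by (simp only: mult.commute)
    also have "\<dots> = \<one>" using pow_ord_eq_1[OF y] by (simp only: nat_pow_one inv_one)
    finally show ?thesis .
  qed
  then have "ord x dvd ?k * ord y" using pow_eq_id[OF x] by simp
  then have dx: "ord x dvd ?k" using cop by (simp add: coprime_dvd_mult_left_iff)
  have ey: "y [^] ?k = inv (x [^] ?k)" using ex y by simp
  have "y [^] (?k * ord x) = \<one>"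
  proof -
    have "y [^] (?k * ord x) = (y [^] ?k) [^] ord x" using y by (simp add: nat_pow_pow)
    also have "\<dots> = inv ((x [^] ?k) [^] ord x)" using ey x by (simp add: nat_pow_inv)
    also have "\<dots> = inv ((x [^] ord x) [^] ?k)" using nat_pow_pow[OF x, of ?k "ord x"] nat_pow_pow[OF x, of "ord x" ?k] by (simp only: mult.commute)
    also have "\<dots> = \<one>" using pow_ord_eq_1[OF x] by (simp only: nat_pow_one inv_one)
    finally show ?thesis .
  qed
  then have "ord y dvd ?k * ord x" using pow_eq_id[OF y] by simp
  then have dy: "ord y dvd ?k" using cop by (simp add: coprime_dvd_mult_left_iff coprime_commute)
  have "ord x * ord y dvd ?k" using divides_mult[OF dx dy cop] .
  then show ?thesis using d1 by (simp add: dvd_antisym)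
qed


lemma inv_cancel_l1 [simp]: "x \<in> carrier G \<Longrightarrow> y \<in> carrier G \<Longrightarrow> inv x \<otimes> (x \<otimes> y) = y"
  by (simp add: m_assoc[symmetric])
lemma inv_cancel_l2 [simp]: "x \<in> carrier G \<Longrightarrow> y \<in> carrier G \<Longrightarrow> x \<otimes> (inv x \<otimes> y) = y"
  by (simp add: m_assoc[symmetric])

lemma conj_iter:
  assumes A: "A \<in> carrier G" and B: "B \<in> carrier G" and D: "D \<in> carrier G"
    and cen: "\<And>Z. Z \<in> carrier G \<Longrightarrow> D \<otimes> Z = Z \<otimes> D"
    and eq: "A \<otimes> B \<otimes> inv A = D \<otimes> B"
  shows "A [^] (k::nat) \<otimes> B \<otimes> inv (A [^] k) = D [^] k \<otimes> B"
proof (induction k)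
  case 0 show ?case using B by simp
next
  case (Suc k)
  have "A [^] Suc k \<otimes> B \<otimes> inv (A [^] Suc k) = A [^] k \<otimes> (A \<otimes> B \<otimes> inv A) \<otimes> inv (A [^] k)"
    using A B by (simp add: m_assoc inv_mult_group)
  also have "\<dots> = A [^] k \<otimes> (D \<otimes> B) \<otimes> inv (A [^] k)" using eq by simp
  also have "\<dots> = D \<otimes> (A [^] k \<otimes> B \<otimes> inv (A [^] k))"
  proof -
    have c1: "A [^] k \<otimes> D = D \<otimes> A [^] k" using cen[of "A [^] k"] A by simp
    show ?thesis using c1 A B D by (simp add: m_assoc[symmetric])
  qed
  also have "\<dots> = D \<otimes> (D [^] k \<otimes> B)" using Suc.IH by simp
  also have "\<dots> = D [^] Suc k \<otimes> B"
  proof -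
    have c2: "D \<otimes> D [^] k = D [^] k \<otimes> D" using cen[of "D [^] k"] D by simp
    show ?thesis using c2 B D by (simp add: m_assoc[symmetric])
  qed
  finally show ?case .
qed

lemma comm_central_one:
  assumes U: "U \<in> carrier G" and V: "V \<in> carrier G"
    and Cdef: "C = U \<otimes> V \<otimes> inv U \<otimes> inv V"
    and cen: "\<And>Z. Z \<in> carrier G \<Longrightarrow> C \<otimes> Z = Z \<otimes> C"
    and Um: "U [^] (m::nat) = \<one>" and Vn: "V [^] (n::nat) = \<one>" and cop: "coprime m n"
  shows "C = \<one>"
proof -
  have Cc: "C \<in> carrier G" using Cdef U V by simp
  have e1: "U \<otimes> V \<otimes> inv U = C \<otimes> V" using Cdef U V by (simp add: m_assoc)
  have e2: "V \<otimes> inv U \<otimes> inv V = C \<otimes> inv U"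
  proof -
    have "C \<otimes> inv U = inv U \<otimes> C" using cen[of "inv U"] U by simp
    also have "\<dots> = V \<otimes> inv U \<otimes> inv V" using Cdef U V by (simp add: m_assoc)
    finally show ?thesis by simp
  qed
  have "U [^] m \<otimes> V \<otimes> inv (U [^] m) = C [^] m \<otimes> V"
    using conj_iter[OF U V Cc cen e1] .
  then have "C [^] m \<otimes> V = V" using Um V by simp
  then have cm: "C [^] m = \<one>" using V Cc by simp
  have "V [^] n \<otimes> inv U \<otimes> inv (V [^] n) = C [^] n \<otimes> inv U"
    using conj_iter[OF V _ Cc cen e2] U by simp
  then have "C [^] n \<otimes> inv U = inv U" using Vn U by simp
  then have cn: "C [^] n = \<one>" using U Cc by simp
  have "ord C dvd m" "ord C dvd n" using cm cn pow_eq_id[OF Cc] by simp_all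
  then have "is_unit (ord C)" using coprime_common_divisor[OF cop] by blast
  then have "ord C = 1" by simp
  then show ?thesis using ord_eq_1[OF Cc] by simp
qed

lemma lc_subgroup: "subgroup (lower_central G i) G"
proof (induction i)
  case 0 show ?case using subgroup_self by simp
next
  case (Suc i)
  have "{h \<otimes> k \<otimes> inv h \<otimes> inv k | h k. h \<in> lower_central G i \<and> k \<in> carrier G} \<subseteq> carrier G"
    using subgroup.subset[OF Suc.IH] by auto
  then show ?case by (simp add: generate_is_subgroup)
qed

lemma lc_carrier: "h \<in> lower_central G i \<Longrightarrow> h \<in> carrier G"
  by (rule subgroup.mem_carrier[OF lc_subgroup])

lemma conj_comm_eq:
  assumes "g \<in> carrier G" "a \<in> carrier G" "b \<in> carrier G"
  shows "g \<otimes> (a \<otimes> b \<otimes> inv a \<otimes> inv b) \<otimes> inv g =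
    (g \<otimes> a \<otimes> inv g) \<otimes> (g \<otimes> b \<otimes> inv g) \<otimes> inv (g \<otimes> a \<otimes> inv g) \<otimes> inv (g \<otimes> b \<otimes> inv g)"
  using assms by (simp add: m_assoc inv_mult_group)

lemma lc_conj: "g \<in> carrier G \<Longrightarrow> h \<in> lower_central G i \<Longrightarrow> g \<otimes> h \<otimes> inv g \<in> lower_central G i"
proof (induction i arbitrary: g h)
  case 0 then show ?case by simp
next
  case (Suc i)
  define S where "S = {h \<otimes> k \<otimes> inv h \<otimes> inv k | h k. h \<in> lower_central G i \<and> k \<in> carrier G}"
  have S: "g \<otimes> s \<otimes> inv g \<in> S" if g: "g \<in> carrier G" and s: "s \<in> S" for g s
  proof -
    obtain a b where ab: "s = a \<otimes> b \<otimes> inv a \<otimes> inv b" "a \<in> lower_central G i" "b \<in> carrier G"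
      using s unfolding S_def by blast
    have ac: "a \<in> carrier G" using lc_carrier ab(2) by simp
    have "g \<otimes> s \<otimes> inv g = (g \<otimes> a \<otimes> inv g) \<otimes> (g \<otimes> b \<otimes> inv g) \<otimes> inv (g \<otimes> a \<otimes> inv g) \<otimes> inv (g \<otimes> b \<otimes> inv g)"
      using conj_comm_eq[OF g ac ab(3)] ab(1) by simp
    moreover have "g \<otimes> a \<otimes> inv g \<in> lower_central G i" using Suc.IH[OF g ab(2)] .
    moreover have "g \<otimes> b \<otimes> inv g \<in> carrier G" using g ab(3) by simp
    ultimately show ?thesis unfolding S_def by blast
  qed
  have "h \<in> generate G S" using Suc.prems(2) unfolding S_def by simp
  then show ?case unfolding lower_central.simps(2) S_def[symmetric] using Suc.prems(1)
  proof (induction h arbitrary: g rule: generate.induct)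
    case one then show ?case by (simp add: generate.one)
  next
    case (incl h) then show ?case using S by (simp add: generate.incl)
  next
    case (inv h)
    have hc: "h \<in> carrier G" using inv.hyps unfolding S_def using lc_carrier by auto
    have "g \<otimes> inv h \<otimes> inv g = inv (g \<otimes> h \<otimes> inv g)"
      using hc inv.prems by (simp add: m_assoc inv_mult_group)
    then show ?case using generate.inv[OF S[OF inv.prems inv.hyps]] by simp
  next
    case (eng h1 h2)
    have sub: "generate G S \<subseteq> carrier G"
      using subgroup.subset[OF lc_subgroup[of "Suc i"]] unfolding lower_central.simps(2) S_def[symmetric] .
    have c1: "h1 \<in> carrier G" "h2 \<in> carrier G" using eng.hyps sub by auto
    have "g \<otimes> (h1 \<otimes> h2) \<otimes> inv g = (g \<otimes> h1 \<otimes> inv g) \<otimes> (g \<otimes> h2 \<otimes> inv g)"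
      using c1 eng.prems by (simp add: m_assoc)
    then show ?case using generate.eng[OF eng.IH(1)[OF eng.prems] eng.IH(2)[OF eng.prems]] by simp
  qed
qed

lemma lc_normal: "lower_central G i \<lhd> G"
  by (rule normal_invI[OF lc_subgroup]) (rule lc_conj)

lemma lc_comm: "h \<in> lower_central G i \<Longrightarrow> k \<in> carrier G \<Longrightarrow> h \<otimes> k \<otimes> inv h \<otimes> inv k \<in> lower_central G (Suc i)"
  unfolding lower_central.simps(2) by (rule generate.incl) blast

lemma nilp_comm:
  assumes nil: "lower_central G c = {\<one>}" and x: "x \<in> carrier G" and y: "y \<in> carrier G"
    and cop: "coprime (ord x) (ord y)"
  shows "x \<otimes> y = y \<otimes> x"
proof -
  let ?c = "x \<otimes> y \<otimes> inv x \<otimes> inv y"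
  have cc: "?c \<in> carrier G" using x y by simp
  have "?c \<in> lower_central G i" for i
  proof (induction i)
    case 0 show ?case using cc by simp
  next
    case (Suc i)
    define N where "N = lower_central G (Suc i)"
    interpret N: normal N G unfolding N_def by (rule lc_normal)
    interpret Q: group "G Mod N" by (rule N.factorgroup_is_group)
    interpret h: group_hom G "G Mod N" "\<lambda>a. N #> a"
      using N.r_coset_hom_Mod Q.is_group is_group by (simp add: group_hom_def group_hom_axioms_def)
    have cen: "(N #> ?c) \<otimes>\<^bsub>G Mod N\<^esub> Z = Z \<otimes>\<^bsub>G Mod N\<^esub> (N #> ?c)"
      if Z: "Z \<in> carrier (G Mod N)" for Z
    proof -
      obtain g where g: "g \<in> carrier G" "Z = N #> g" using Z unfolding carrier_FactGroup by blast
      have com: "?c \<otimes> g \<otimes> inv ?c \<otimes> inv g \<in> N" unfolding N_def using lc_comm[OF Suc.IH g(1)] .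
      have comc: "?c \<otimes> g \<otimes> inv ?c \<otimes> inv g \<in> carrier G" using cc g by simp
      have eq: "?c \<otimes> g = (?c \<otimes> g \<otimes> inv ?c \<otimes> inv g) \<otimes> (g \<otimes> ?c)"
        using cc g by (simp add: m_assoc)
      have "(N #> ?c) \<otimes>\<^bsub>G Mod N\<^esub> Z = N #> (?c \<otimes> g)"
        using h.hom_mult[OF cc g(1)] g(2) by simp
      also have "\<dots> = (N #> (?c \<otimes> g \<otimes> inv ?c \<otimes> inv g)) \<otimes>\<^bsub>G Mod N\<^esub> (N #> (g \<otimes> ?c))"
        using h.hom_mult[OF comc, of "g \<otimes> ?c"] eq cc g(1) by simp
      also have "N #> (?c \<otimes> g \<otimes> inv ?c \<otimes> inv g) = N"
        using N.rcos_const[OF is_group com] .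
      also have "N \<otimes>\<^bsub>G Mod N\<^esub> (N #> (g \<otimes> ?c)) = N #> (g \<otimes> ?c)"
        using Q.l_one[of "N #> (g \<otimes> ?c)"] h.hom_closed[of "g \<otimes> ?c"] cc g(1) by simp
      also have "\<dots> = Z \<otimes>\<^bsub>G Mod N\<^esub> (N #> ?c)"
        using h.hom_mult[OF g(1) cc] g(2) by simp
      finally show ?thesis .
    qed
    have hx: "N #> x \<in> carrier (G Mod N)" "N #> y \<in> carrier (G Mod N)"
      using h.hom_closed x y by auto
    have Cdef: "N #> ?c = (N #> x) \<otimes>\<^bsub>G Mod N\<^esub> (N #> y) \<otimes>\<^bsub>G Mod N\<^esub> inv\<^bsub>G Mod N\<^esub> (N #> x)
        \<otimes>\<^bsub>G Mod N\<^esub> inv\<^bsub>G Mod N\<^esub> (N #> y)"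
      using x y by (simp add: h.hom_mult h.hom_inv del: mult_FactGroup)
    have px: "(N #> x) [^]\<^bsub>G Mod N\<^esub> ord x = \<one>\<^bsub>G Mod N\<^esub>"
      using h.hom_nat_pow[OF x, of "ord x"] x h.hom_one by simp
    have py: "(N #> y) [^]\<^bsub>G Mod N\<^esub> ord y = \<one>\<^bsub>G Mod N\<^esub>"
      using h.hom_nat_pow[OF y, of "ord y"] y h.hom_one by simp
    have "N #> ?c = \<one>\<^bsub>G Mod N\<^esub>"
      using Q.comm_central_one[OF hx Cdef cen px py cop] by simp
    then have "N #> ?c = N" by simp
    then have "?c \<in> N" using rcos_self[OF cc N.subgroup_axioms] by simp
    then show ?case unfolding N_def .
  qed
  then have "?c = \<one>" using nil by blast
  have "x \<otimes> y = ?c \<otimes> (y \<otimes> x)" using x y by (simp add: m_assoc)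
  then show ?thesis using \<open>?c = \<one>\<close> x y by simp
qed
end

lemma prod_primes_dvd:
  fixes S :: "nat set"
  assumes "finite S" "\<And>p. p \<in> S \<Longrightarrow> Factorial_Ring.prime p"
  shows "\<Prod>S dvd k \<longleftrightarrow> (\<forall>p\<in>S. p dvd k)"
  using assms
proof (induction S rule: finite_induct)
  case empty then show ?case by simp
next
  case (insert p S)
  have cop: "coprime p (\<Prod>S)"
    by (rule prod_coprime_right) (use insert in \<open>auto intro: primes_coprime\<close>)
  have "\<Prod>(insert p S) = p * \<Prod>S" using insert by simp
  then show ?case using insert cop divides_mult[OF _ _ cop, of k]
    by (auto intro: dvd_mult_left dvd_mult_right)
qed

lemma finite_prime_divs:
  assumes "group G" "finite (carrier G)" shows "finite (prime_divs G)"
proof -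
  have "order G > 0" using assms monoid.order_gt_0_iff_finite[OF group.is_monoid[OF assms(1)]] by simp
  then have "prime_divs G \<subseteq> {..order G}" unfolding prime_divs_def by (auto intro: dvd_imp_le)
  then show ?thesis using finite_subset by blast
qed

context group begin

lemma nilp_simplex:
  assumes fin: "finite (carrier G)" and nil: "lower_central G c = {\<one>}"
    and S: "finite S" "S \<subseteq> prime_divs G"
  shows "\<exists>x\<in>carrier G. ord x = \<Prod>S"
  using S
proof (induction S rule: finite_induct)
  case empty then show ?case by (intro bexI[of _ \<one>]) simp_all
next
  case (insert p S)
  obtain xs where xs: "xs \<in> carrier G" "ord xs = \<Prod>S" using insert by auto
  have pp: "Factorial_Ring.prime p" "p dvd order G" using insert(4) unfolding prime_divs_def by auto
  obtain xp where xp: "xp \<in> carrier G" "ord xp = p" using cauchy_ex[OF fin pp] by blast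
  have cop: "coprime (ord xp) (ord xs)" unfolding xp xs
    by (rule prod_coprime_right) (use insert in \<open>auto intro: primes_coprime simp: prime_divs_def\<close>)
  have "ord (xp \<otimes> xs) = ord xp * ord xs"
    using ord_mult_coprime[OF xp(1) xs(1) nilp_comm[OF nil xp(1) xs(1) cop] cop] .
  then have "ord (xp \<otimes> xs) = \<Prod>(insert p S)" using insert xp xs by simp
  then show ?case using xp xs by (intro bexI[of _ "xp \<otimes> xs"]) simp_all
qed

end

lemma dp_carrier [simp]: "carrier (dir_power G n) = (\<Pi>\<^sub>E i\<in>{..<n}. carrier G)"
  by (simp add: dir_power_def)

lemma dp_group: "group G \<Longrightarrow> group (dir_power G n)"
  by (simp add: dir_power_def)

lemma dp_pow:
  assumes "x \<in> carrier (dir_power G n)"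
  shows "x [^]\<^bsub>dir_power G n\<^esub> (k::nat) = (\<lambda>i\<in>{..<n}. x i [^]\<^bsub>G\<^esub> k)"
proof (induction k)
  case 0 then show ?case by (simp add: dir_power_def)
next
  case (Suc k) then show ?case by (auto simp: dir_power_def fun_eq_iff restrict_def)
qed

lemma dp_pow_one:
  assumes "x \<in> carrier (dir_power G n)"
  shows "x [^]\<^bsub>dir_power G n\<^esub> (k::nat) = \<one>\<^bsub>dir_power G n\<^esub> \<longleftrightarrow> (\<forall>i<n. x i [^]\<^bsub>G\<^esub> k = \<one>\<^bsub>G\<^esub>)"
  unfolding dp_pow[OF assms] by (auto simp: dir_power_def fun_eq_iff restrict_def)

lemma dp_ord:
  assumes "group G" "x \<in> carrier (dir_power G n)"
    and "\<And>k. (\<forall>i<n. x i [^]\<^bsub>G\<^esub> (k::nat) = \<one>\<^bsub>G\<^esub>) \<longleftrightarrow> d dvd k"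
  shows "group.ord (dir_power G n) x = d"
  using group.ord_unique[OF dp_group[OF assms(1)] assms(2)] dp_pow_one[OF assms(2)] assms(3) by simp

lemma dp_order: "order (dir_power G n) = order G ^ n"
  by (simp add: order_def card_PiE)

lemma dp_prime_divs: "n > 0 \<Longrightarrow> prime_divs (dir_power G n) = prime_divs G"
  unfolding prime_divs_def dp_order by (auto simp: prime_dvd_power_iff)


lemma part1:
  assumes G: "group G" and fin: "finite (carrier G)"
  shows "skeleton1_vertices (GKC G) = prime_divs G
          \<and> skeleton1_edges (GKC G) = {{p, q} | p q. GK_adj G p q}"
proof (rule conjI)
  show "skeleton1_vertices (GKC G) = prime_divs G"
  proof (rule Set.set_eqI)
    fix v
    show "v \<in> skeleton1_vertices (GKC G) \<longleftrightarrow> v \<in> prime_divs G"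
    proof
      assume "v \<in> skeleton1_vertices (GKC G)"
      then show "v \<in> prime_divs G" unfolding skeleton1_vertices_def GKC_def by auto
    next
      assume v: "v \<in> prime_divs G"
      then have "Factorial_Ring.prime v" "v dvd order G" unfolding prime_divs_def by auto
      then obtain x where "x \<in> carrier G" "group.ord G x = v" using group.cauchy_ex[OF G fin] by blast
      then show "v \<in> skeleton1_vertices (GKC G)" using v unfolding skeleton1_vertices_def GKC_def by auto
    qed
  qed
next
  show "skeleton1_edges (GKC G) = {{p, q} | p q. GK_adj G p q}"
  proof (rule Set.set_eqI)
    fix e
    show "e \<in> skeleton1_edges (GKC G) \<longleftrightarrow> e \<in> {{p, q} | p q. GK_adj G p q}"
    proof
      assume "e \<in> skeleton1_edges (GKC G)"
      then have e: "e \<subseteq> prime_divs G" "\<exists>x\<in>carrier G. group.ord G x = \<Prod>e" "card e = 2"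
        unfolding skeleton1_edges_def GKC_def by auto
      then obtain p q where pq: "e = {p, q}" "p \<noteq> q" by (auto simp: card_2_iff)
      then have "GK_adj G p q" using e unfolding GK_adj_def by auto
      then show "e \<in> {{p, q} | p q. GK_adj G p q}" using pq by blast
    next
      assume "e \<in> {{p, q} | p q. GK_adj G p q}"
      then obtain p q where pq: "e = {p, q}" "GK_adj G p q" by blast
      then show "e \<in> skeleton1_edges (GKC G)"
        unfolding skeleton1_edges_def GKC_def GK_adj_def by auto
    qed
  qed
qed

lemma part2:
  assumes G: "group G" and fin: "finite (carrier G)" and nil: "nilpotent_group G"
  shows "is_simplex_complex (prime_divs G) (GKC G)"
proof -
  obtain c where c: "lower_central G c = {\<one>\<^bsub>G\<^esub>}" using nil unfolding nilpotent_group_def by blast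
  obtain x where "x \<in> carrier G" "group.ord G x = \<Prod>(prime_divs G)"
    using group.nilp_simplex[OF G fin c finite_prime_divs[OF G fin]] by blast
  then show ?thesis unfolding is_simplex_complex_def GKC_def by auto
qed

lemma part3:
  assumes G: "group G" and fin: "finite (carrier G)"
  shows "\<exists>d::nat. d > 0 \<and> (\<forall>n::nat. n > 0 \<longrightarrow>
           (is_simplex_complex (prime_divs (dir_power G n)) (GKC (dir_power G n))
            \<longleftrightarrow> n \<ge> d))"
proof -
  define P where "P = prime_divs G"
  define Q where "Q n \<longleftrightarrow> is_simplex_complex (prime_divs (dir_power G n)) (GKC (dir_power G n))" for n
  have finP: "finite P" unfolding P_def using finite_prime_divs[OF G fin] .
  have primeP: "\<And>p. p \<in> P \<Longrightarrow> Factorial_Ring.prime p" unfolding P_def prime_divs_def by auto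
  have Qiff: "Q n \<longleftrightarrow> (\<exists>x\<in>carrier (dir_power G n). group.ord (dir_power G n) x = \<Prod>P)" if "n > 0" for n
    unfolding Q_def is_simplex_complex_def GKC_def dp_prime_divs[OF that] P_def by simp
  have mono: "Q (Suc n)" if n: "n > 0" and q: "Q n" for n
  proof -
    obtain x where x: "x \<in> carrier (dir_power G n)" "group.ord (dir_power G n) x = \<Prod>P"
      using q Qiff[OF n] by blast
    define x' where "x' = x(n := \<one>\<^bsub>G\<^esub>)"
    have x'c: "x' \<in> carrier (dir_power G (Suc n))"
      using x(1) monoid.one_closed[OF group.is_monoid[OF G]] unfolding x'_def by (auto simp: PiE_iff extensional_def)
    have "(\<forall>i<Suc n. x' i [^]\<^bsub>G\<^esub> (k::nat) = \<one>\<^bsub>G\<^esub>) \<longleftrightarrow> \<Prod>P dvd k" for k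
    proof -
      have "(\<forall>i<Suc n. x' i [^]\<^bsub>G\<^esub> k = \<one>\<^bsub>G\<^esub>) \<longleftrightarrow> (\<forall>i<n. x i [^]\<^bsub>G\<^esub> k = \<one>\<^bsub>G\<^esub>)"
        unfolding x'_def using monoid.nat_pow_one[OF group.is_monoid[OF G]] by (auto simp: less_Suc_eq)
      also have "\<dots> \<longleftrightarrow> x [^]\<^bsub>dir_power G n\<^esub> k = \<one>\<^bsub>dir_power G n\<^esub>"
        using dp_pow_one[OF x(1)] by simp
      also have "\<dots> \<longleftrightarrow> \<Prod>P dvd k"
        using group.pow_eq_id[OF dp_group[OF G] x(1)] x(2) by simp
      finally show ?thesis .
    qed
    then have "group.ord (dir_power G (Suc n)) x' = \<Prod>P" using dp_ord[OF G x'c] by blast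
    then show ?thesis using Qiff[of "Suc n"] x'c by blast
  qed
  have up: "Q m" if "n > 0" "Q n" "n \<le> m" for n m
    using that(3,1,2)
  proof (induction m rule: dec_induct)
    case base then show ?case by simp
  next
    case (step m) then show ?case using mono[of m] by simp
  qed
  define n0 where "n0 = max 1 (card P)"
  have n0: "n0 > 0" "card P \<le> n0" unfolding n0_def by auto
  have Qn0: "Q n0"
  proof -
    obtain h where h: "bij_betw h {0..<card P} P" using ex_bij_betw_nat_finite[OF finP] by blast
    define g where "g p = (SOME x. x \<in> carrier G \<and> group.ord G x = p)" for p
    have g: "g p \<in> carrier G \<and> group.ord G (g p) = p" if "p \<in> P" for p
    proof -
      have "\<exists>x. x \<in> carrier G \<and> group.ord G x = p"
        using group.cauchy_ex[OF G fin] that unfolding P_def prime_divs_def by blast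
      then show ?thesis unfolding g_def by (rule someI_ex)
    qed
    have hP: "h i \<in> P" if "i < card P" for i using h that unfolding bij_betw_def by auto
    define x where "x = (\<lambda>i\<in>{..<n0}. if i < card P then g (h i) else \<one>\<^bsub>G\<^esub>)"
    have xc: "x \<in> carrier (dir_power G n0)"
      unfolding x_def using g hP monoid.one_closed[OF group.is_monoid[OF G]] by auto
    have "(\<forall>i<n0. x i [^]\<^bsub>G\<^esub> (k::nat) = \<one>\<^bsub>G\<^esub>) \<longleftrightarrow> \<Prod>P dvd k" for k
    proof -
      have "(\<forall>i<n0. x i [^]\<^bsub>G\<^esub> k = \<one>\<^bsub>G\<^esub>) \<longleftrightarrow> (\<forall>i<card P. g (h i) [^]\<^bsub>G\<^esub> k = \<one>\<^bsub>G\<^esub>)"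
        unfolding x_def using n0 monoid.nat_pow_one[OF group.is_monoid[OF G]] by auto
      also have "\<dots> \<longleftrightarrow> (\<forall>i<card P. h i dvd k)"
        using g hP group.pow_eq_id[OF G] by auto
      also have "\<dots> \<longleftrightarrow> (\<forall>p\<in>h ` {0..<card P}. p dvd k)" by auto
      also have "\<dots> \<longleftrightarrow> (\<forall>p\<in>P. p dvd k)"
        using h unfolding bij_betw_def by simp
      also have "\<dots> \<longleftrightarrow> \<Prod>P dvd k" using prod_primes_dvd[OF finP primeP] by simp
      finally show ?thesis .
    qed
    then have "group.ord (dir_power G n0) x = \<Prod>P" using dp_ord[OF G xc] by blast
    then show ?thesis using Qiff[OF n0(1)] xc by blast
  qed
  define d where "d = (LEAST n. 0 < n \<and> Q n)"
  have d: "0 < d \<and> Q d" unfolding d_def by (rule LeastI[of _ n0]) (use n0 Qn0 in simp)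
  have "\<forall>n::nat. n > 0 \<longrightarrow> (Q n \<longleftrightarrow> n \<ge> d)"
  proof (intro allI impI iffI)
    fix n :: nat assume "n > 0" "Q n"
    then show "n \<ge> d" unfolding d_def by (simp add: Least_le)
  next
    fix n :: nat assume "n > 0" "n \<ge> d"
    then show "Q n" using up[of d n] d by simp
  qed
  then show ?thesis using d unfolding Q_def by blast
qed


theorem mainTheorem5:
  fixes G :: "('a, 'b) monoid_scheme"
  assumes "group G" and "finite (carrier G)"
  shows "(skeleton1_vertices (GKC G) = prime_divs G
          \<and> skeleton1_edges (GKC G) = {{p, q} | p q. GK_adj G p q})
       \<and> (nilpotent_group G \<longrightarrow> is_simplex_complex (prime_divs G) (GKC G))
       \<and> (\<exists>d::nat. d > 0 \<and> (\<forall>n::nat. n > 0 \<longrightarrow>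
           (is_simplex_complex (prime_divs (dir_power G n)) (GKC (dir_power G n))
            \<longleftrightarrow> n \<ge> d)))"
  using part1[OF assms] part2[OF assms] part3[OF assms] by blast

end
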